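(* Let $|\cdot|:\mathbb{R}^n\to\mathbb{R}_{\ge0}$ be an orthant-monotonic norm and let $\|\cdot\|$ be the induced matrix norm. Then for every $A=(a_{ij})\in\mathbb{R}^{n\times n}$, $\|A\|\ge\max\{|a_{11}|,\dots,|a_{nn}|\}$ (absolute values of the diagonal entries).
   Context: The induced matrix norm is $\|A\|=\max_{|x|=1}|Ax|$. A norm $|\cdot|$ on $\mathbb{R}^n$ is orthant-monotonic if for all $x,y\in\mathbb{R}^n$: whenever $x_iy_i\ge 0$ and $|x_i|\le|y_i|$ for all $i$, then $|x|\le|y|$. *)

theory Defs
  imports "HOL-Analysis.Analysis"
begin

definition is_norm :: "(real^'n \<Rightarrow> real) \<Rightarrow> bool" where
  "is_norm N \<longleftrightarrow>
     (\<forall>x. 0 \<le> N x) \<and> (\<forall>x. N x = 0 \<longleftrightarrow> x = 0) \<and>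
     (\<forall>c x. N (c *\<^sub>R x) = \<bar>c\<bar> * N x) \<and>
     (\<forall>x y. N (x + y) \<le> N x + N y)"

definition orthant_monotonic :: "(real^'n \<Rightarrow> real) \<Rightarrow> bool" where
  "orthant_monotonic N \<longleftrightarrow>
     (\<forall>x y. (\<forall>i. x$i * y$i \<ge> 0 \<and> \<bar>x$i\<bar> \<le> \<bar>y$i\<bar>) \<longrightarrow> N x \<le> N y)"

definition induced_norm :: "(real^'n \<Rightarrow> real) \<Rightarrow> real^'n^'n \<Rightarrow> real" where
  "induced_norm N A = Sup {N (A *v x) | x. N x = 1}"

end

theory Submission
  imports Defs
begin

lemma norm_sum_le:
  assumes "is_norm N" and "finite S"
  shows "N (sum f S) \<le> (\<Sum>i\<in>S. N (f i))"
  using assms(2)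
proof (induction S rule: finite_induct)
  case empty
  have "N 0 = 0" using assms(1) unfolding is_norm_def by blast
  then show ?case by simp
next
  case (insert a F)
  have "N (f a + sum f F) \<le> N (f a) + N (sum f F)"
    using assms(1) unfolding is_norm_def by blast
  then show ?case using insert by simp
qed

lemma proj_le:
  fixes N :: "real^'n \<Rightarrow> real"
  assumes "orthant_monotonic N"
  shows "N ((\<chi> j. if j = i then y$i else 0)) \<le> N y"
  using assms unfolding orthant_monotonic_def
  by (erule_tac x="\<chi> j. if j = i then y$i else 0" in allE, erule_tac x=y in allE) auto

lemma coord_bound:
  fixes N :: "real^'n \<Rightarrow> real"
  assumes "is_norm N" "orthant_monotonic N"
  shows "\<bar>x$j\<bar> * N (axis j 1) \<le> N x"
proof -
  have "(\<chi> k. if k = j then x$j else 0) = x$j *\<^sub>R axis j (1::real)"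
    by (vector axis_def)
  then have "N (x$j *\<^sub>R axis j 1) \<le> N x" using proj_le[OF assms(2), of j x] by simp
  then show ?thesis using assms(1) unfolding is_norm_def by metis
qed

theorem lemma1:
  fixes N :: "real^'n \<Rightarrow> real" and A :: "real^'n^'n"
  assumes "is_norm N" and "orthant_monotonic N"
  shows "induced_norm N A \<ge> Max {\<bar>A$i$i\<bar> | i. True}"
proof -
  have nn: "\<And>x. 0 \<le> N x" and z: "\<And>x. N x = 0 \<longleftrightarrow> x = 0"
    and h: "\<And>c x. N (c *\<^sub>R x) = \<bar>c\<bar> * N x"
    using assms(1) unfolding is_norm_def by auto
  have pos: "\<And>j. N (axis j 1) > 0"
    using nn z by (metis axis_eq_0_iff less_eq_real_def zero_neq_one)
  define S where "S = {N (A *v x) | x. N x = 1}"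
  define B where "B = (\<Sum>j\<in>UNIV. N (A *v axis j 1) / N (axis j 1))"
  have bdd: "bdd_above S"
  proof (rule bdd_aboveI)
    fix s assume "s \<in> S"
    then obtain x where x: "N x = 1" "s = N (A *v x)" unfolding S_def by auto
    have "A *v x = (\<Sum>j\<in>UNIV. x$j *\<^sub>R (A *v axis j 1))"
    proof -
      have "A *v x = A *v (\<Sum>j\<in>UNIV. x$j *s axis j 1)" by (simp add: basis_expansion)
      also have "\<dots> = (\<Sum>j\<in>UNIV. x$j *\<^sub>R (A *v axis j 1))"
        by (simp add: vec.sum scalar_mult_eq_scaleR matrix_vector_mult_scaleR)
      finally show ?thesis .
    qed
    then have "s \<le> (\<Sum>j\<in>UNIV. N (x$j *\<^sub>R (A *v axis j 1)))"
      using norm_sum_le[OF assms(1), of UNIV "\<lambda>j. x$j *\<^sub>R (A *v axis j 1)"] x by simp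
    also have "\<dots> \<le> B" unfolding B_def
    proof (rule sum_mono)
      fix j
      have "\<bar>x$j\<bar> \<le> 1 / N (axis j 1)"
        using coord_bound[OF assms, of x j] x pos[of j] by (simp add: field_simps)
      then have "\<bar>x$j\<bar> * N (A *v axis j 1) \<le> 1 / N (axis j 1) * N (A *v axis j 1)"
        by (rule mult_right_mono[OF _ nn])
      then show "N (x$j *\<^sub>R (A *v axis j 1)) \<le> N (A *v axis j 1) / N (axis j 1)"
        by (simp add: h)
    qed
    finally show "s \<le> B" .
  qed
  have fin: "finite {\<bar>A$i$i\<bar> | i. True}"
  proof -
    have "{\<bar>A$i$i\<bar> | i. True} = (\<lambda>i. \<bar>A$i$i\<bar>) ` UNIV" by auto
    then show ?thesis by simp
  qed
  have "{\<bar>A$i$i\<bar> | i. True} \<noteq> {}" by auto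
  then obtain i where i: "Max {\<bar>A$i$i\<bar> | i. True} = \<bar>A$i$i\<bar>"
    using Max_in[OF fin] by auto
  define c where "c = 1 / N (axis i 1)"
  define x where "x = c *\<^sub>R axis i (1::real)"
  have cpos: "c > 0" using pos[of i] unfolding c_def by simp
  have Nx: "N x = 1" unfolding x_def c_def using h pos[of i]
    by (simp add: abs_of_pos)
  have "(\<chi> j. if j = i then (A *v x)$i else 0) = A$i$i *\<^sub>R x"
    unfolding x_def
    by (vector axis_def matrix_vector_mult_def) (simp add: if_distrib[of "\<lambda>t. A$i$_ * (c * t)"] cong: if_cong)
  then have "N (A$i$i *\<^sub>R x) \<le> N (A *v x)" using proj_le[OF assms(2), of i "A *v x"] by simp
  then have "\<bar>A$i$i\<bar> \<le> N (A *v x)" using h Nx by simp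
  also have "\<dots> \<le> Sup S"
    by (rule cSup_upper[OF _ bdd]) (use Nx S_def in auto)
  finally show ?thesis using i unfolding induced_norm_def S_def by simp
qed

end
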